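(* Let $n\ge 3$ and let $q$ be a real number with $0<q\le 1/6$. Consider the Markov chain on $\{0,1,\dots,n-1\}$ with $n\times n$ transition probability matrix $\mathbf P(q)=(P_{ij})$ given by: $P_{00}=1-q$, $P_{01}=q$; $P_{10}=5q$, $P_{11}=1-6q$, $P_{12}=q$; for $2\le i\le n-2$: $P_{i0}=4q$, $P_{i,i-1}=q$, $P_{ii}=1-6q$, $P_{i,i+1}=q$; $P_{n-1,0}=2q$, $P_{n-1,n-2}=q$, $P_{n-1,n-1}=1-3q$; all other entries $0$. Then the steady state probability vector $\vec\pi=(\pi_0,\dots,\pi_{n-1})$ (the unique probability vector with $\vec\pi=\vec\pi\mathbf P(q)$) is given by $$\pi_i=\frac{C_{n-1-i}}{\sum_{l=0}^{n-1}C_l},\qquad i=0,1,\dots,n-1.$$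
   Context: The Lucas-balancing numbers $C_m$ are defined by $C_0=1$, $C_1=3$, $C_{m+1}=6C_m-C_{m-1}$ (equivalently $C_m=\sqrt{8B_m^2+1}$ with $B_m$ the balancing numbers $B_0=0,B_1=1,B_{m+1}=6B_m-B_{m-1}$). *)

theory Defs
  imports Main "HOL.Real"
begin

fun lucas_bal :: "nat \<Rightarrow> int" where
  "lucas_bal 0 = 1"
| "lucas_bal (Suc 0) = 3"
| "lucas_bal (Suc (Suc m)) = 6 * lucas_bal (Suc m) - lucas_bal m"

definition trans_P :: "nat \<Rightarrow> real \<Rightarrow> nat \<Rightarrow> nat \<Rightarrow> real" where
  "trans_P n q i j =
    (if i = 0 then (if j = 0 then 1 - q else if j = 1 then q else 0)
     else if i = 1 then (if j = 0 then 5 * q else if j = 1 then 1 - 6 * q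
                         else if j = 2 then q else 0)
     else if i \<le> n - 2 then (if j = 0 then 4 * q else if j = i - 1 then q
                         else if j = i then 1 - 6 * q else if j = i + 1 then q else 0)
     else if i = n - 1 then (if j = 0 then 2 * q else if j = n - 2 then q
                         else if j = n - 1 then 1 - 3 * q else 0)
     else 0)"

definition stationary_prob :: "nat \<Rightarrow> real \<Rightarrow> (nat \<Rightarrow> real) \<Rightarrow> bool" where
  "stationary_prob n q \<pi> \<longleftrightarrow>
     (\<forall>i<n. 0 \<le> \<pi> i) \<and> (\<Sum>i<n. \<pi> i) = 1 \<and>
     (\<forall>j<n. \<pi> j = (\<Sum>i<n. \<pi> i * trans_P n q i j))"

end

theory Submission
  imports Defs
begin

abbreviation CC :: "nat \<Rightarrow> real" where "CC m \<equiv> real_of_int (lucas_bal m)"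

lemma CC_rec: "CC (Suc (Suc m)) = 6 * CC (Suc m) - CC m"
  by simp

lemma CC_pos_mono: "1 \<le> CC m \<and> CC m \<le> CC (Suc m)"
proof (induction m)
  case 0 then show ?case by simp
next
  case (Suc m) then show ?case by (simp only: CC_rec) linarith
qed

lemma CC_ge1: "1 \<le> CC m" using CC_pos_mono by blast

lemma CC_sum: "4 * (\<Sum>l<Suc m. CC l) = CC (Suc m) - CC m + 2"
proof (induction m)
  case 0 then show ?case by simp
next
  case (Suc m)
  have "4 * (\<Sum>l<Suc (Suc m). CC l) = 4 * (\<Sum>l<Suc m. CC l) + 4 * CC (Suc m)" by simp
  also have "\<dots> = CC (Suc (Suc m)) - CC (Suc m) + 2" using Suc by simp
  finally show ?case .
qed

lemma trans_col:
  assumes "n \<ge> 3" "1 \<le> j" "j < n" "i < n"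
  shows "trans_P n q i j = (if i = j - 1 then q else 0)
      + (if i = j then (if j = n - 1 then 1 - 3*q else 1 - 6*q) else 0)
      + (if i = j + 1 then q else 0)"
proof -
  consider "i = 0" | "i = 1" | "2 \<le> i" "i \<le> n - 2" | "i = n - 1" using assms by linarith
  then show ?thesis
  proof cases
    case 1 then show ?thesis using assms unfolding trans_P_def by auto
  next
    case 2 then show ?thesis using assms unfolding trans_P_def by auto
  next
    case 3 then show ?thesis using assms unfolding trans_P_def by auto
  next
    case 4 then show ?thesis using assms unfolding trans_P_def by auto
  qed
qed

lemma trans_col0:
  assumes "n \<ge> 3" "i < n"
  shows "trans_P n q i 0 = 4*q + (if i = 0 then 1 - 5*q else 0) + (if i = 1 then q else 0)
     + (if i = n - 1 then -2*q else 0)"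
  using assms unfolding trans_P_def by auto

lemma sum_col:
  assumes "n \<ge> 3" "1 \<le> j" "j < n"
  shows "(\<Sum>i<n. f i * trans_P n q i j) = q * f (j - 1)
      + (if j = n - 1 then 1 - 3*q else 1 - 6*q) * f j + (if j + 1 < n then q * f (j+1) else 0)"
proof -
  have "(\<Sum>i<n. f i * trans_P n q i j) = (\<Sum>i<n. (if i = j - 1 then q * f i else 0)
      + (if i = j then (if j = n - 1 then 1 - 3*q else 1 - 6*q) * f i else 0)
      + (if i = j + 1 then q * f i else 0))"
    by (rule sum.cong) (use assms in \<open>auto simp: trans_col\<close>)
  also have "\<dots> = q * f (j - 1)
      + (if j = n - 1 then 1 - 3*q else 1 - 6*q) * f j + (if j + 1 < n then q * f (j+1) else 0)"
    using assms by (simp add: sum.distrib less_imp_diff_less)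
  finally show ?thesis .
qed

lemma sum_col0:
  assumes "n \<ge> 3"
  shows "(\<Sum>i<n. f i * trans_P n q i 0) = 4*q*(\<Sum>i<n. f i) + (1 - 5*q) * f 0 + q * f 1
      - 2*q * f (n - 1)"
proof -
  have "(\<Sum>i<n. f i * trans_P n q i 0) = (\<Sum>i<n. 4*q*f i + (if i = 0 then (1 - 5*q) * f i else 0)
     + (if i = 1 then q * f i else 0) + (if i = n - 1 then -2*q * f i else 0))"
    by (rule sum.cong) (use assms in \<open>auto simp: trans_col0 algebra_simps\<close>)
  also have "\<dots> = 4*q*(\<Sum>i<n. f i) + (1 - 5*q) * f 0 + q * f 1 - 2*q * f (n - 1)"
    using assms by (simp add: sum.distrib sum_distrib_left)
  finally show ?thesis .
qed

lemma S_pos: "n \<ge> 1 \<Longrightarrow> 0 < (\<Sum>l<n. CC l)"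
proof -
  have h: "\<And>i. 0 < CC i" using CC_ge1 by (metis less_le_trans zero_less_one)
  then have h': "\<And>i. 0 < lucas_bal i" by simp
  assume "n \<ge> 1" then show ?thesis by (intro sum_pos) (auto simp: h' lessThan_empty_iff)
qed

lemma sum_rev: "(\<Sum>i<n. CC (n - 1 - i)) = (\<Sum>l<n. CC l)"
  using sum.nat_diff_reindex[of "\<lambda>l. CC l" n] by simp

lemma forward_aux:
  fixes p :: "nat \<Rightarrow> real"
  assumes n3: "n \<ge> 3"
    and last: "3 * p (n - 1) = p (n - 2)"
    and mid: "\<And>j. 1 \<le> j \<Longrightarrow> j \<le> n - 2 \<Longrightarrow> p (j - 1) = 6 * p j - p (j + 1)"
  shows "k + 1 < n \<longrightarrow> p (n - 1 - k) = CC k * p (n - 1) \<and> p (n - 1 - Suc k) = CC (Suc k) * p (n - 1)"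
proof (induction k)
  case 0
  show ?case using last by (simp add: numeral_eq_Suc)
next
  case (Suc k)
  show ?case
  proof
    assume a: "Suc k + 1 < n"
    then have IH: "p (n - 1 - k) = CC k * p (n - 1)" "p (n - 1 - Suc k) = CC (Suc k) * p (n - 1)"
      using Suc by auto
    define j where "j = n - 1 - Suc k"
    have j1: "1 \<le> j" "j \<le> n - 2" using a n3 unfolding j_def by auto
    have e1: "j - 1 = n - 1 - Suc (Suc k)" "j + 1 = n - 1 - k" using a unfolding j_def by auto
    have "p (n - 1 - Suc (Suc k)) = 6 * p j - p (j + 1)" using mid[OF j1] e1 by simp
    also have "\<dots> = CC (Suc (Suc k)) * p (n - 1)" using IH e1 unfolding j_def
      by (simp only: CC_rec) (simp add: algebra_simps)
    finally show "p (n - 1 - Suc k) = CC (Suc k) * p (n - 1) \<and>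
       p (n - 1 - Suc (Suc k)) = CC (Suc (Suc k)) * p (n - 1)" using IH by simp
  qed
qed

lemma alg0:
  fixes S x y q :: real
  assumes "0 < S" "4 * S = 5 * x - y + 2"
  shows "4*q + (1 - 5*q) * (x / S) + q * (y / S) - 2*q * (1 / S) = x / S"
proof -
  have "4*q + (1 - 5*q) * (x / S) + q * (y / S) - 2*q * (1 / S) = x / S + q * (4*S - 5*x + y - 2) / S"
    using assms(1) by (simp add: field_simps)
  then show ?thesis using assms(2) by simp
qed

lemma alg1:
  fixes S z w v q :: real
  assumes "0 < S" "z = 6 * w - v"
  shows "q * (z / S) + (1 - 6*q) * (w / S) + q * (v / S) = w / S"
  using assms(1) unfolding assms(2) by (simp add: field_simps)

theorem theorem3p2:
  fixes n :: nat and q :: real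
  assumes "n \<ge> 3" and "0 < q" and "q \<le> 1/6"
  shows "\<forall>\<pi>. stationary_prob n q \<pi> \<longleftrightarrow>
           (\<forall>i<n. \<pi> i = real_of_int (lucas_bal (n - 1 - i)) / (\<Sum>l<n. real_of_int (lucas_bal l)))"
proof -
  obtain S where S_def: "S = (\<Sum>l<n. CC l)" by blast
  have Spos: "0 < S" unfolding S_def using assms(1) by (intro S_pos) simp
  show ?thesis
  proof (intro allI, rule iffI)
    fix p :: "nat \<Rightarrow> real"
    assume st: "stationary_prob n q p"
    have eq: "\<And>j. j < n \<Longrightarrow> p j = (\<Sum>i<n. p i * trans_P n q i j)"
      and s1: "(\<Sum>i<n. p i) = 1" using st unfolding stationary_prob_def by blast+
    have last: "3 * p (n - 1) = p (n - 2)"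
    proof -
      have f: "n - 1 < n" "1 \<le> n - 1" "\<not> n - 1 + 1 < n" "n - 1 - 1 = n - 2" using assms(1) by arith+
      have "p (n - 1) = (\<Sum>i<n. p i * trans_P n q i (n - 1))" by (rule eq[OF f(1)])
      also have "\<dots> = q * p (n - 2) + (1 - 3*q) * p (n - 1)"
        using sum_col[OF assms(1) f(2) f(1), of p q] f by simp
      finally have "p (n - 1) = q * p (n - 2) + (1 - 3*q) * p (n - 1)" .
      then show ?thesis using assms(2) by (simp add: algebra_simps)
    qed
    have mid: "p (j - 1) = 6 * p j - p (j + 1)" if "1 \<le> j" "j \<le> n - 2" for j
    proof -
      have "p j = q * p (j - 1) + (1 - 6*q) * p j + q * p (j + 1)"
      proof -
        have f: "j < n" "j \<noteq> n - 1" "j + 1 < n" using that assms(1) by auto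
        have "p j = (\<Sum>i<n. p i * trans_P n q i j)" by (rule eq[OF f(1)])
        also have "\<dots> = q * p (j - 1) + (1 - 6*q) * p j + q * p (j + 1)"
          using sum_col[OF assms(1) that(1) f(1), of p q] f by simp
        finally show ?thesis .
      qed
      then have "q * (p (j - 1) - (6 * p j - p (j + 1))) = 0" by (simp add: algebra_simps)
      then show ?thesis using assms(2) by simp
    qed
    have all: "p i = CC (n - 1 - i) * p (n - 1)" if "i < n" for i
    proof -
      show ?thesis
      proof (cases "i = 0")
        case True
        have "p (n - 1 - Suc (n - 2)) = CC (Suc (n - 2)) * p (n - 1)"
        proof -
          have "n - 2 + 1 < n" using assms(1) by arith
          moreover have "n - 2 + 1 < n \<longrightarrow> p (n - 1 - (n - 2)) = CC (n - 2) * p (n - 1) \<and> p (n - 1 - Suc (n - 2)) = CC (Suc (n - 2)) * p (n - 1)"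
            by (rule forward_aux[OF assms(1) last]) (rule mid; assumption)
          ultimately show ?thesis by blast
        qed
        moreover have "n - 1 - Suc (n - 2) = 0" "Suc (n - 2) = n - 1" using assms(1) by arith+
        ultimately show ?thesis using True by simp
      next
        case False
        have "p (n - 1 - (n - 1 - i)) = CC (n - 1 - i) * p (n - 1)"
        proof -
          have "n - 1 - i + 1 < n" using that False by arith
          moreover have "n - 1 - i + 1 < n \<longrightarrow> p (n - 1 - (n - 1 - i)) = CC (n - 1 - i) * p (n - 1) \<and> p (n - 1 - Suc (n - 1 - i)) = CC (Suc (n - 1 - i)) * p (n - 1)"
            by (rule forward_aux[OF assms(1) last]) (rule mid; assumption)
          ultimately show ?thesis by blast
        qed
        then show ?thesis using that by simp
      qed
    qed
    have "1 = (\<Sum>i<n. CC (n - 1 - i) * p (n - 1))" unfolding s1[symmetric]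
      by (rule sum.cong[OF refl], rule all, simp)
    also have "\<dots> = (\<Sum>i<n. CC (n - 1 - i)) * p (n - 1)" by (rule sum_distrib_right[symmetric])
    also have "\<dots> = S * p (n - 1)" unfolding S_def sum_rev by (rule refl)
    finally have "p (n - 1) = 1 / S" using Spos by (simp add: field_simps)
    then have pl: "p (n - 1) = 1 / S" .
    show "\<forall>i<n. p i = CC (n - 1 - i) / (\<Sum>l<n. CC l)"
    proof (intro allI impI)
      fix i assume "i < n"
      have "p i = CC (n - 1 - i) / S" using all[OF \<open>i < n\<close>] pl by simp
      then show "p i = CC (n - 1 - i) / (\<Sum>l<n. CC l)" unfolding S_def .
    qed
  next
    fix p :: "nat \<Rightarrow> real"
    assume h: "\<forall>i<n. p i = CC (n - 1 - i) / (\<Sum>l<n. CC l)"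
    then have pv: "\<And>i. i < n \<Longrightarrow> p i = CC (n - 1 - i) / S" unfolding S_def by simp
    have nn: "\<forall>i<n. 0 \<le> p i"
    proof (intro allI impI)
      fix i assume "i < n"
      have "0 \<le> CC (n - 1 - i)" using CC_ge1[of "n - 1 - i"] by linarith
      then show "0 \<le> p i" using pv[OF \<open>i < n\<close>] Spos by simp
    qed
    have s1: "(\<Sum>i<n. p i) = 1"
    proof -
      have "(\<Sum>i<n. p i) = (\<Sum>i<n. CC (n - 1 - i) / S)" using pv by simp
      also have "\<dots> = (\<Sum>i<n. CC (n - 1 - i)) / S" by (simp add: sum_divide_distrib)
      also have "\<dots> = 1" using Spos unfolding sum_rev S_def by simp
      finally show ?thesis .
    qed
    have eqs: "p j = (\<Sum>i<n. p i * trans_P n q i j)" if "j < n" for j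
    proof (cases "j = 0")
      case True
      define m where "m = n - 3"
      have m: "n = Suc (Suc (Suc m))" using assms(1) unfolding m_def by arith
      have "4 * S = CC n - CC (n - 1) + 2" unfolding S_def using CC_sum[of "n - 1"] m by simp
      also have "CC n = 6 * CC (n - 1) - CC (n - 2)" using m by simp
      finally have key: "4 * S = 5 * CC (n - 1) - CC (n - 2) + 2" by simp
      have p0: "p 0 = CC (n - 1) / S" and p1: "p 1 = CC (n - 2) / S" and pl: "p (n - 1) = 1 / S"
        using pv assms(1) by (auto simp: numeral_eq_Suc)
      have "(\<Sum>i<n. p i * trans_P n q i j) = 4*q + (1 - 5*q) * p 0 + q * p 1 - 2*q * p (n - 1)"
        using sum_col0[OF assms(1), of p q] s1 True by simp
      also have "\<dots> = p 0" unfolding p0 p1 pl by (rule alg0[OF Spos key])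
      finally show ?thesis using True by simp
    next
      case False
      then have j1: "1 \<le> j" by simp
      show ?thesis
      proof (cases "j = n - 1")
        case True
        have pa: "p j = 1 / S" "p (j - 1) = 3 / S" using pv assms(1) True by (auto simp: numeral_eq_Suc)
        have sc: "(\<Sum>i<n. p i * trans_P n q i j) = q * p (j - 1) + (1 - 3*q) * p j"
        proof -
          have "\<not> j + 1 < n" using True that by arith
          then show ?thesis using sum_col[OF assms(1) j1 that, of p q] True by simp
        qed
        also have "\<dots> = q * (3 / S) + (1 - 3*q) * (1 / S)" unfolding pa ..
        also have "\<dots> = 1 / S" using Spos by (simp add: field_simps)
        finally show ?thesis using pa by simp
      next
        case False
        define k where "k = n - 2 - j"
        have k: "n - 1 - j = Suc k" using that False unfolding k_def by arith
        have e: "j - 1 < n" "n - 1 - (j - 1) = Suc (Suc k)" "j + 1 < n" "n - 1 - (j + 1) = k"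
          using that False j1 unfolding k_def by linarith+
        have a: "p j = CC (Suc k) / S" using pv[OF that] k by simp
        have b: "p (j - 1) = CC (Suc (Suc k)) / S" using pv[OF e(1)] e(2) by simp
        have c: "p (j + 1) = CC k / S" using pv[OF e(3)] e(4) by simp
        have "(\<Sum>i<n. p i * trans_P n q i j) = q * p (j - 1) + (1 - 6*q) * p j + q * p (j + 1)"
          using sum_col[OF assms(1) j1 that, of p q] False k by auto
        also have "\<dots> = p j" unfolding a b c by (rule alg1[OF Spos CC_rec])
        finally show ?thesis by simp
      qed
    qed
    show "stationary_prob n q p" unfolding stationary_prob_def using nn s1 eqs by blast
  qed
qed

end
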